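(* Let $(\mathcal{T}_\lambda)_{\lambda>0}$ be a family of bounded operators on $\mathcal{B}_1(\mathcal{H}_P)$ with $\sup_\lambda\|\mathcal{T}_\lambda\|<\infty$. If $\operatorname{pt-lim}_{\lambda\to0}\mathcal{T}_\lambda=0$, then $\mathcal{T}_\lambda\to0$ strongly, i.e. $\lim_{\lambda\to0}\|\mathcal{T}_\lambda(T)\|_1=0$ for every $T\in\mathcal{B}_1(\mathcal{H}_P)$.
   Context: $\mathcal{H}_P=\ell^2(\mathbb{Z}^d)\otimes\mathbb{C}^N$ with $\{|x\rangle\}$ the canonical basis of $\ell^2(\mathbb{Z}^d)$; $\mathcal{B}_1(\mathcal{H}_P)$ is the space of trace-class operators with trace norm $\|A\|_1=\mathrm{tr}|A|$, and $\|\mathcal{T}\|$ is the operator norm of $\mathcal{T}$ on $\mathcal{B}_1(\mathcal{H}_P)$. For an operator $A$ on $\mathcal{H}_P$, $\langle x|A|y\rangle$ denotes the $N\times N$ matrix block. For $\mathcal{T}$ on $\mathcal{B}_1(\mathcal{H}_P)$ and $x_0,y_0,x,y\in\mathbb{Z}^d$, the kernel $(\mathcal{T})_{x_0,y_0;x,y}$ is the linear map on $N\times N$ matrices $M\mapsto\langle x|\mathcal{T}(M\otimes|x_0\rangle\langle y_0|)|y\rangle$. One writes $\operatorname{pt-lim}_{\lambda\to0}\mathcal{T}_\lambda=0$ if $\lim_{\lambda\to0}\sum_{x,y\in\mathbb{Z}^d}\|(\mathcal{T}_\lambda)_{x_0,y_0;x,y}\|=0$ for all $x_0,y_0\in\mathbb{Z}^d$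 (matrix operator norm). *)

theory Defs
  imports "HOL-Analysis.Analysis"
begin

text \<open>The Hilbert space H_P = l^2(Z^d) (x) C^N is modelled as square-summable functions on
the index set (int^'d) \<times> 'n, where the finite type 'd gives the dimension d and the finite
type 'n gives the N internal degrees of freedom.  A (bounded) operator A on H_P is represented
by its matrix kernel K i j = <i|A|j>.\<close>

type_synonym ('d,'n) site = "(int ^ 'd) \<times> 'n"
type_synonym ('d,'n) kernel = "('d,'n) site \<Rightarrow> ('d,'n) site \<Rightarrow> complex"

definition is_l2 :: "('a \<Rightarrow> complex) \<Rightarrow> bool" where
  "is_l2 f \<longleftrightarrow> (\<lambda>i. (norm (f i))\<^sup>2) summable_on UNIV"

definition l2norm :: "('a \<Rightarrow> complex) \<Rightarrow> real" where
  "l2norm f = sqrt (\<Sum>\<^sub>\<infinity>i. (norm (f i))\<^sup>2)"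

definition nuclear_rep :: "('a \<Rightarrow> 'a \<Rightarrow> complex) \<Rightarrow> (nat \<Rightarrow> 'a \<Rightarrow> complex) \<Rightarrow> (nat \<Rightarrow> 'a \<Rightarrow> complex) \<Rightarrow> bool" where
  "nuclear_rep K u v \<longleftrightarrow>
     (\<forall>k. is_l2 (u k) \<and> is_l2 (v k)) \<and>
     summable (\<lambda>k. l2norm (u k) * l2norm (v k)) \<and>
     (\<forall>i j. (\<lambda>k. u k i * cnj (v k j)) sums K i j)"

definition trace_class :: "('a \<Rightarrow> 'a \<Rightarrow> complex) \<Rightarrow> bool" where
  "trace_class K \<longleftrightarrow> (\<exists>u v. nuclear_rep K u v)"

text \<open>Trace norm ||K||_1 (= tr|K|), as the nuclear norm.\<close>
definition trace_norm :: "('a \<Rightarrow> 'a \<Rightarrow> complex) \<Rightarrow> real" where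
  "trace_norm K = Inf {(\<Sum>k. l2norm (u k) * l2norm (v k)) | u v. nuclear_rep K u v}"

definition bounded_superop :: "(('a \<Rightarrow> 'a \<Rightarrow> complex) \<Rightarrow> ('a \<Rightarrow> 'a \<Rightarrow> complex)) \<Rightarrow> bool" where
  "bounded_superop T \<longleftrightarrow>
     (\<forall>A. trace_class A \<longrightarrow> trace_class (T A)) \<and>
     (\<forall>A B. trace_class A \<longrightarrow> trace_class B \<longrightarrow> T (\<lambda>i j. A i j + B i j) = (\<lambda>i j. T A i j + T B i j)) \<and>
     (\<forall>c A. trace_class A \<longrightarrow> T (\<lambda>i j. c * A i j) = (\<lambda>i j. c * T A i j)) \<and>
     (\<exists>C. \<forall>A. trace_class A \<longrightarrow> trace_norm (T A) \<le> C * trace_norm A)"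

definition superop_norm :: "(('a \<Rightarrow> 'a \<Rightarrow> complex) \<Rightarrow> ('a \<Rightarrow> 'a \<Rightarrow> complex)) \<Rightarrow> real" where
  "superop_norm T = (SUP A\<in>{A. trace_class A \<and> trace_norm A \<le> 1}. trace_norm (T A))"

definition vec_norm :: "('n::finite \<Rightarrow> complex) \<Rightarrow> real" where
  "vec_norm w = sqrt (\<Sum>a\<in>UNIV. (norm (w a))\<^sup>2)"

definition mat_opnorm :: "('n::finite \<Rightarrow> 'n \<Rightarrow> complex) \<Rightarrow> real" where
  "mat_opnorm M = (SUP w\<in>{w. vec_norm w \<le> 1}. vec_norm (\<lambda>a. \<Sum>b\<in>UNIV. M a b * w b))"

definition matmap_norm :: "(('n::finite \<Rightarrow> 'n \<Rightarrow> complex) \<Rightarrow> ('n \<Rightarrow> 'n \<Rightarrow> complex)) \<Rightarrow> real" where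
  "matmap_norm \<Phi> = (SUP M\<in>{M. mat_opnorm M \<le> 1}. mat_opnorm (\<Phi> M))"

text \<open>M \<otimes> |x0><y0| as a kernel.\<close>
definition elem_op :: "('n \<Rightarrow> 'n \<Rightarrow> complex) \<Rightarrow> int ^ 'd \<Rightarrow> int ^ 'd \<Rightarrow> ('d,'n) kernel" where
  "elem_op M x0 y0 = (\<lambda>(x,a) (y,b). if x = x0 \<and> y = y0 then M a b else 0)"

text \<open>The kernel (T)_{x0,y0;x,y} : M \<mapsto> <x| T(M \<otimes> |x0><y0|) |y>.\<close>
definition superop_kernel :: "(('d,'n) kernel \<Rightarrow> ('d,'n) kernel) \<Rightarrow> int ^ 'd \<Rightarrow> int ^ 'd \<Rightarrow> int ^ 'd \<Rightarrow> int ^ 'd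
     \<Rightarrow> ('n \<Rightarrow> 'n \<Rightarrow> complex) \<Rightarrow> ('n \<Rightarrow> 'n \<Rightarrow> complex)" where
  "superop_kernel T x0 y0 x y = (\<lambda>M a b. T (elem_op M x0 y0) (x,a) (y,b))"

text \<open>pt-lim_{\<lambda>\<rightarrow>0} T_\<lambda> = 0: for all x0,y0 the (eventually finite) sums
 \<Sum>_{x,y} \<parallel>(T_\<lambda>)_{x0,y0;x,y}\<parallel> tend to 0 as \<lambda> \<rightarrow> 0+.\<close>
definition pt_lim_zero :: "(real \<Rightarrow> ('d::finite,'n::finite) kernel \<Rightarrow> ('d,'n) kernel) \<Rightarrow> bool" where
  "pt_lim_zero T \<longleftrightarrow> (\<forall>x0 y0.
     (\<forall>\<^sub>F l in at_right 0. (\<lambda>(x,y). matmap_norm (superop_kernel (T l) x0 y0 x y)) summable_on UNIV) \<and>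
     ((\<lambda>l. \<Sum>\<^sub>\<infinity>(x,y)\<in>UNIV. matmap_norm (superop_kernel (T l) x0 y0 x y)) \<longlongrightarrow> 0) (at_right 0))"

end

theory Submission
  imports Defs
begin


definition rst :: "'a set \<Rightarrow> ('a \<Rightarrow> complex) \<Rightarrow> 'a \<Rightarrow> complex" where
  "rst S u = (\<lambda>i. if i \<in> S then u i else 0)"

definition rk :: "('a \<Rightarrow> complex) \<Rightarrow> ('a \<Rightarrow> complex) \<Rightarrow> 'a \<Rightarrow> 'a \<Rightarrow> complex" where
  "rk u v = (\<lambda>i j. u i * cnj (v j))"

lemma l2norm_nonneg: "0 \<le> l2norm u"
  unfolding l2norm_def by (simp add: infsum_nonneg)

lemma l2_restrict:
  assumes "is_l2 u"
  shows "is_l2 (rst S u)" "l2norm (rst S u) = sqrt (\<Sum>\<^sub>\<infinity>i\<in>S. (norm (u i))\<^sup>2)"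
proof -
  have s: "(\<lambda>i. (norm (u i))\<^sup>2) summable_on S"
    using assms unfolding is_l2_def by (rule summable_on_subset_banach) simp
  have e: "\<And>x. x \<in> UNIV \<inter> S \<Longrightarrow> (norm (rst S u x))\<^sup>2 = (norm (u x))\<^sup>2"
    by (simp add: rst_def)
  show "is_l2 (rst S u)" unfolding is_l2_def
    using s by (subst summable_on_cong_neutral[of S UNIV]) (auto simp: rst_def)
  show "l2norm (rst S u) = sqrt (\<Sum>\<^sub>\<infinity>i\<in>S. (norm (u i))\<^sup>2)" unfolding l2norm_def
    by (subst infsum_cong_neutral[of S UNIV]) (auto simp: rst_def)
qed

lemma l2norm_restrict_le:
  assumes "is_l2 u" shows "l2norm (rst S u) \<le> l2norm u"
proof -
  have "(\<Sum>\<^sub>\<infinity>i\<in>S. (norm (u i))\<^sup>2) \<le> (\<Sum>\<^sub>\<infinity>i. (norm (u i))\<^sup>2)"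
    using assms unfolding is_l2_def
    by (intro infsum_mono_neutral) (auto intro: summable_on_subset_banach)
  thus ?thesis using l2_restrict[OF assms] unfolding l2norm_def by simp
qed

lemma l2_entry:
  assumes "is_l2 u" shows "norm (u i) \<le> l2norm u"
proof -
  have "sum (\<lambda>i. (norm (u i))\<^sup>2) {i} \<le> (\<Sum>\<^sub>\<infinity>i. (norm (u i))\<^sup>2)"
    using assms unfolding is_l2_def by (intro finite_sum_le_infsum) auto
  thus ?thesis unfolding l2norm_def by (simp add: real_le_rsqrt)
qed

lemma l2_delta:
  "is_l2 (\<lambda>i. if i = p then c else 0)" "l2norm (\<lambda>i. if i = p then c else 0) = norm c"
proof -
  have "(\<lambda>i. (norm (if i = p then c else 0))\<^sup>2) summable_on {p}" by simp
  thus "is_l2 (\<lambda>i. if i = p then c else 0)" unfolding is_l2_def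
    by (subst summable_on_cong_neutral[of "{p}" UNIV]) auto
  have "(\<Sum>\<^sub>\<infinity>i. (norm (if i = p then c else 0))\<^sup>2) = (\<Sum>\<^sub>\<infinity>i\<in>{p}. (norm (if i = p then c else 0))\<^sup>2)"
    by (rule infsum_cong_neutral) auto
  thus "l2norm (\<lambda>i. if i = p then c else 0) = norm c" unfolding l2norm_def by simp
qed

lemma l2_zero: "is_l2 (\<lambda>i. 0)" "l2norm (\<lambda>i. 0) = 0"
  by (auto simp: is_l2_def l2norm_def)

lemma l2_scale:
  assumes "is_l2 u" shows "is_l2 (\<lambda>i. c * u i)" "l2norm (\<lambda>i. c * u i) = norm c * l2norm u"
proof -
  have eq: "(\<lambda>i. (norm (c * u i))\<^sup>2) = (\<lambda>i. (norm c)\<^sup>2 * (norm (u i))\<^sup>2)"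
    by (simp add: norm_mult power_mult_distrib)
  show "is_l2 (\<lambda>i. c * u i)" using assms unfolding is_l2_def eq
    by (rule summable_on_cmult_right)
  show "l2norm (\<lambda>i. c * u i) = norm c * l2norm u" using assms unfolding l2norm_def is_l2_def eq
    by (simp add: infsum_cmult_right real_sqrt_mult)
qed

lemma l2_tail:
  assumes "is_l2 u" "e > 0"
  shows "\<exists>F. finite F \<and> (\<Sum>\<^sub>\<infinity>i\<in>-F. (norm (u i))\<^sup>2) \<le> e"
proof -
  obtain F where F: "finite F" "dist (sum (\<lambda>i. (norm (u i))\<^sup>2) F) (\<Sum>\<^sub>\<infinity>i. (norm (u i))\<^sup>2) \<le> e"
    using infsum_finite_approximation[of "\<lambda>i. (norm (u i))\<^sup>2" UNIV e] assms unfolding is_l2_def by auto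
  have "(\<Sum>\<^sub>\<infinity>i\<in>UNIV - F. (norm (u i))\<^sup>2) = (\<Sum>\<^sub>\<infinity>i. (norm (u i))\<^sup>2) - (\<Sum>\<^sub>\<infinity>i\<in>F. (norm (u i))\<^sup>2)"
    using assms F(1) unfolding is_l2_def by (intro infsum_Diff) auto
  moreover have "UNIV - F = -F" by auto
  ultimately show ?thesis using F by (auto simp: dist_real_def)
qed

lemma l2_tail_mono:
  assumes "is_l2 u" "F \<subseteq> G"
  shows "(\<Sum>\<^sub>\<infinity>i\<in>-G. (norm (u i))\<^sup>2) \<le> (\<Sum>\<^sub>\<infinity>i\<in>-F. (norm (u i))\<^sup>2)"
  using assms unfolding is_l2_def
  by (intro infsum_mono_neutral) (auto intro: summable_on_subset_banach)



definition ilv :: "(nat \<Rightarrow> 'b) \<Rightarrow> (nat \<Rightarrow> 'b) \<Rightarrow> nat \<Rightarrow> 'b" where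
  "ilv f g n = (if even n then f (n div 2) else g (n div 2))"

lemma sums_ilv:
  fixes f g :: "nat \<Rightarrow> 'b::real_normed_vector"
  assumes "f sums a" "g sums b" shows "(\<lambda>n. ilv f g n) sums (a + b)"
proof -
  define F where "F n = (if even n then f (n div 2) else 0)" for n
  define G where "G n = (if odd n then g (n div 2) else 0)" for n
  have sm1: "strict_mono (\<lambda>k::nat. 2*k)" by (auto simp: strict_mono_def)
  have sm2: "strict_mono (\<lambda>k::nat. 2*k+1)" by (auto simp: strict_mono_def)
  have "(\<lambda>k. F (2*k)) sums a" using assms(1) by (simp add: F_def)
  moreover have "\<And>n. n \<notin> range (\<lambda>k::nat. 2*k) \<Longrightarrow> F n = 0"
  proof -
    fix n :: nat assume "n \<notin> range (\<lambda>k::nat. 2*k)"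
    hence "\<not> even n" by (metis evenE rangeI)
    thus "F n = 0" by (simp add: F_def)
  qed
  ultimately have a: "F sums a" using sums_mono_reindex[OF sm1] by blast
  have "(\<lambda>k. G (2*k+1)) sums b" using assms(2) by (simp add: G_def)
  moreover have "\<And>n. n \<notin> range (\<lambda>k::nat. 2*k+1) \<Longrightarrow> G n = 0"
  proof -
    fix n :: nat assume "n \<notin> range (\<lambda>k::nat. 2*k+1)"
    hence "\<not> odd n" by (metis oddE rangeI)
    thus "G n = 0" by (simp add: G_def)
  qed
  ultimately have b: "G sums b" using sums_mono_reindex[OF sm2] by blast
  have "(\<lambda>n. F n + G n) sums (a + b)" using a b by (rule sums_add)
  moreover have "(\<lambda>n. F n + G n) = (\<lambda>n. ilv f g n)"
    by (auto simp: F_def G_def ilv_def)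
  ultimately show ?thesis by simp
qed

lemma ilv_apply: "ilv f g n x = ilv (\<lambda>k. f k x) (\<lambda>k. g k x) n"
  by (simp add: ilv_def)

lemma nuc_sum_nonneg:
  assumes "nuclear_rep K u v" shows "0 \<le> (\<Sum>k. l2norm (u k) * l2norm (v k))"
  using assms unfolding nuclear_rep_def
  by (intro suminf_nonneg) (auto simp: l2norm_nonneg)

lemma tn_lower:
  assumes "nuclear_rep K u v" shows "trace_norm K \<le> (\<Sum>k. l2norm (u k) * l2norm (v k))"
  unfolding trace_norm_def
proof (rule cInf_lower)
  show "(\<Sum>k. l2norm (u k) * l2norm (v k)) \<in> {\<Sum>k. l2norm (u k) * l2norm (v k) |u v. nuclear_rep K u v}"
    using assms by blast
  show "bdd_below {\<Sum>k. l2norm (u k) * l2norm (v k) |u v. nuclear_rep K u v}"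
    by (rule bdd_belowI[of _ 0]) (auto intro: nuc_sum_nonneg)
qed

lemma tn_nonneg:
  assumes "trace_class K" shows "0 \<le> trace_norm K"
proof -
  obtain u v where uv: "nuclear_rep K u v" using assms unfolding trace_class_def by blast
  show ?thesis unfolding trace_norm_def
  proof (rule cInf_greatest)
    show "{\<Sum>k. l2norm (u k) * l2norm (v k) |u v. nuclear_rep K u v} \<noteq> {}" using uv by blast
    fix x assume "x \<in> {\<Sum>k. l2norm (u k) * l2norm (v k) |u v. nuclear_rep K u v}"
    then obtain u' v' where "nuclear_rep K u' v'" "x = (\<Sum>k. l2norm (u' k) * l2norm (v' k))" by blast
    thus "0 \<le> x" using nuc_sum_nonneg by simp
  qed
qed

lemma tn_via_eps:
  assumes "trace_class K" "k \<ge> 0"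
    and "\<And>u v. nuclear_rep K u v \<Longrightarrow> X \<le> k * (\<Sum>n. l2norm (u n) * l2norm (v n))"
  shows "X \<le> k * trace_norm K"
proof (rule field_le_epsilon)
  fix e :: real assume e: "0 < e"
  let ?S = "{\<Sum>k. l2norm (u k) * l2norm (v k) |u v. nuclear_rep K u v}"
  have "?S \<noteq> {}" using assms(1) unfolding trace_class_def by blast
  moreover have "Inf ?S < trace_norm K + e / (k+1)"
  proof -
    have "e / (k+1) > 0" using e assms(2) by simp
    thus ?thesis unfolding trace_norm_def by linarith
  qed
  ultimately have "\<exists>x\<in>?S. x < trace_norm K + e / (k+1)"
    unfolding trace_norm_def by (rule cInf_lessD)
  then obtain x where "x \<in> ?S" "x < trace_norm K + e / (k+1)" by blast
  then obtain u v where uv: "nuclear_rep K u v"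
    "(\<Sum>n. l2norm (u n) * l2norm (v n)) < trace_norm K + e / (k+1)"
    by auto
  have "X \<le> k * (\<Sum>n. l2norm (u n) * l2norm (v n))" using assms(3) uv(1) .
  also have "\<dots> \<le> k * (trace_norm K + e / (k+1))"
    using uv(2) assms(2) by (intro mult_left_mono) auto
  also have "\<dots> = k * trace_norm K + e * (k / (k+1))" using assms(2) by (simp add: algebra_simps)
  also have "\<dots> \<le> k * trace_norm K + e * 1"
  proof -
    have "k / (k+1) \<le> 1" using assms(2) by simp
    thus ?thesis using e by (intro add_left_mono mult_left_mono) auto
  qed
  finally show "X \<le> k * trace_norm K + e" by simp
qed

lemma nuc_rank_one:
  assumes "is_l2 u" "is_l2 v"
  shows "nuclear_rep (rk u v) (\<lambda>k. if k = 0 then u else (\<lambda>_. 0)) (\<lambda>k. if k = 0 then v else (\<lambda>_. 0))"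
    and "(\<Sum>k. l2norm ((\<lambda>k. if k = 0 then u else (\<lambda>_. 0)) k) * l2norm ((\<lambda>k. if k = 0 then v else (\<lambda>_. 0)) k))
         = l2norm u * l2norm v"
proof -
  have n: "(\<lambda>k. l2norm ((\<lambda>k. if k = 0 then u else (\<lambda>_. 0)) k) * l2norm ((\<lambda>k. if k = 0 then v else (\<lambda>_. 0)) k))
     = (\<lambda>k. if k = 0 then l2norm u * l2norm v else 0)"
    by (auto simp: l2_zero)
  have s: "(\<lambda>k::nat. if k = 0 then l2norm u * l2norm v else 0) sums (l2norm u * l2norm v)"
    using sums_single[of 0 "\<lambda>_. l2norm u * l2norm v"] by simp
  show "nuclear_rep (rk u v) (\<lambda>k. if k = 0 then u else (\<lambda>_. 0)) (\<lambda>k. if k = 0 then v else (\<lambda>_. 0))"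
    unfolding nuclear_rep_def
  proof (intro conjI allI)
    fix k show "is_l2 ((\<lambda>k. if k = 0 then u else (\<lambda>_. 0)) k)" "is_l2 ((\<lambda>k. if k = 0 then v else (\<lambda>_. 0)) k)"
      using assms l2_zero by auto
  next
    show "summable (\<lambda>k. l2norm ((\<lambda>k. if k = 0 then u else (\<lambda>_. 0)) k) * l2norm ((\<lambda>k. if k = 0 then v else (\<lambda>_. 0)) k))"
      unfolding n using s by (rule sums_summable)
  next
    fix i j
    have "(\<lambda>k::nat. if k = 0 then u i * cnj (v j) else 0) sums (u i * cnj (v j))"
      using sums_single[of 0 "\<lambda>_. u i * cnj (v j)"] by simp
    moreover have "(\<lambda>k. (if k = 0 then u else (\<lambda>_. 0)) i * cnj ((if k = 0 then v else (\<lambda>_. 0)) j))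
       = (\<lambda>k::nat. if k = 0 then u i * cnj (v j) else 0)" by auto
    ultimately show "(\<lambda>k. (if k = 0 then u else (\<lambda>_. 0)) i * cnj ((if k = 0 then v else (\<lambda>_. 0)) j)) sums rk u v i j"
      by (simp add: rk_def)
  qed
  show "(\<Sum>k. l2norm ((\<lambda>k. if k = 0 then u else (\<lambda>_. 0)) k) * l2norm ((\<lambda>k. if k = 0 then v else (\<lambda>_. 0)) k))
         = l2norm u * l2norm v" unfolding n using s by (simp add: sums_iff)
qed

lemma tc_rank_one:
  assumes "is_l2 u" "is_l2 v"
  shows "trace_class (rk u v)" "trace_norm (rk u v) \<le> l2norm u * l2norm v"
proof -
  show "trace_class (rk u v)" using nuc_rank_one(1)[OF assms] unfolding trace_class_def by blast
  show "trace_norm (rk u v) \<le> l2norm u * l2norm v"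
    using tn_lower[OF nuc_rank_one(1)[OF assms]] nuc_rank_one(2)[OF assms] by simp
qed

lemma nuc_add:
  assumes A: "nuclear_rep A u v" and B: "nuclear_rep B u' v'"
  shows "nuclear_rep (\<lambda>i j. A i j + B i j) (ilv u u') (ilv v v')"
    "(\<Sum>k. l2norm (ilv u u' k) * l2norm (ilv v v' k)) =
     (\<Sum>k. l2norm (u k) * l2norm (v k)) + (\<Sum>k. l2norm (u' k) * l2norm (v' k))"
proof -
  have n: "(\<lambda>k. l2norm (ilv u u' k) * l2norm (ilv v v' k)) =
    (\<lambda>k. ilv (\<lambda>k. l2norm (u k) * l2norm (v k)) (\<lambda>k. l2norm (u' k) * l2norm (v' k)) k)"
    by (auto simp: ilv_def)
  have s: "(\<lambda>k. l2norm (ilv u u' k) * l2norm (ilv v v' k)) sums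
     ((\<Sum>k. l2norm (u k) * l2norm (v k)) + (\<Sum>k. l2norm (u' k) * l2norm (v' k)))"
    unfolding n using A B unfolding nuclear_rep_def by (intro sums_ilv) (auto simp: summable_sums)
  show "(\<Sum>k. l2norm (ilv u u' k) * l2norm (ilv v v' k)) =
     (\<Sum>k. l2norm (u k) * l2norm (v k)) + (\<Sum>k. l2norm (u' k) * l2norm (v' k))"
    using s by (simp add: sums_iff)
  show "nuclear_rep (\<lambda>i j. A i j + B i j) (ilv u u') (ilv v v')"
    unfolding nuclear_rep_def
  proof (intro conjI allI)
    fix k show "is_l2 (ilv u u' k)" "is_l2 (ilv v v' k)"
      using A B unfolding nuclear_rep_def ilv_def by auto
  next
    show "summable (\<lambda>k. l2norm (ilv u u' k) * l2norm (ilv v v' k))"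
      using s by (rule sums_summable)
  next
    fix i j
    have "(\<lambda>k. ilv (\<lambda>k. u k i * cnj (v k j)) (\<lambda>k. u' k i * cnj (v' k j)) k) sums (A i j + B i j)"
      using A B unfolding nuclear_rep_def by (intro sums_ilv) auto
    moreover have "(\<lambda>k. ilv u u' k i * cnj (ilv v v' k j)) =
       (\<lambda>k. ilv (\<lambda>k. u k i * cnj (v k j)) (\<lambda>k. u' k i * cnj (v' k j)) k)"
      by (auto simp: ilv_def)
    ultimately show "(\<lambda>k. ilv u u' k i * cnj (ilv v v' k j)) sums (A i j + B i j)" by simp
  qed
qed

lemma tc_add:
  assumes "trace_class A" "trace_class B"
  shows "trace_class (\<lambda>i j. A i j + B i j)"
    "trace_norm (\<lambda>i j. A i j + B i j) \<le> trace_norm A + trace_norm B"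
proof -
  show tc: "trace_class (\<lambda>i j. A i j + B i j)"
    using assms nuc_add(1) unfolding trace_class_def by blast
  have "\<And>u' v'. nuclear_rep B u' v' \<Longrightarrow> trace_norm (\<lambda>i j. A i j + B i j) - (\<Sum>k. l2norm (u' k) * l2norm (v' k)) \<le> 1 * trace_norm A"
  proof -
    fix u' v' assume B: "nuclear_rep B u' v'"
    show "trace_norm (\<lambda>i j. A i j + B i j) - (\<Sum>k. l2norm (u' k) * l2norm (v' k)) \<le> 1 * trace_norm A"
    proof (rule tn_via_eps[OF assms(1)])
      fix u v assume A: "nuclear_rep A u v"
      show "trace_norm (\<lambda>i j. A i j + B i j) - (\<Sum>k. l2norm (u' k) * l2norm (v' k)) \<le> 1 * (\<Sum>n. l2norm (u n) * l2norm (v n))"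
        using tn_lower[OF nuc_add(1)[OF A B]] nuc_add(2)[OF A B] by simp
    qed simp
  qed
  hence "trace_norm (\<lambda>i j. A i j + B i j) - trace_norm A \<le> 1 * trace_norm B"
    by (intro tn_via_eps[OF assms(2)]) (auto simp: algebra_simps)
  thus "trace_norm (\<lambda>i j. A i j + B i j) \<le> trace_norm A + trace_norm B" by simp
qed

lemma nuc_scale:
  assumes A: "nuclear_rep A u v"
  shows "nuclear_rep (\<lambda>i j. c * A i j) (\<lambda>k i. c * u k i) v"
    "(\<Sum>k. l2norm (\<lambda>i. c * u k i) * l2norm (v k)) = norm c * (\<Sum>k. l2norm (u k) * l2norm (v k))"
proof -
  have n: "(\<lambda>k. l2norm (\<lambda>i. c * u k i) * l2norm (v k)) = (\<lambda>k. norm c * (l2norm (u k) * l2norm (v k)))"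
    using A unfolding nuclear_rep_def by (auto simp: l2_scale)
  have s: "(\<lambda>k. l2norm (\<lambda>i. c * u k i) * l2norm (v k)) sums (norm c * (\<Sum>k. l2norm (u k) * l2norm (v k)))"
    unfolding n using A unfolding nuclear_rep_def by (intro sums_mult) (auto simp: summable_sums)
  show "(\<Sum>k. l2norm (\<lambda>i. c * u k i) * l2norm (v k)) = norm c * (\<Sum>k. l2norm (u k) * l2norm (v k))"
    using s by (simp add: sums_iff)
  show "nuclear_rep (\<lambda>i j. c * A i j) (\<lambda>k i. c * u k i) v"
    unfolding nuclear_rep_def
  proof (intro conjI allI)
    fix k show "is_l2 (\<lambda>i. c * u k i)" "is_l2 (v k)" using A unfolding nuclear_rep_def by (auto simp: l2_scale)
  next
    show "summable (\<lambda>k. l2norm (\<lambda>i. c * u k i) * l2norm (v k))" using s by (rule sums_summable)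
  next
    fix i j
    have "(\<lambda>k. c * (u k i * cnj (v k j))) sums (c * A i j)"
      using A unfolding nuclear_rep_def by (intro sums_mult) auto
    thus "(\<lambda>k. c * u k i * cnj (v k j)) sums (c * A i j)" by (simp add: mult.assoc)
  qed
qed

lemma tc_scale:
  assumes "trace_class A"
  shows "trace_class (\<lambda>i j. c * A i j)" "trace_norm (\<lambda>i j. c * A i j) \<le> norm c * trace_norm A"
proof -
  show "trace_class (\<lambda>i j. c * A i j)" using assms nuc_scale(1) unfolding trace_class_def by blast
  show "trace_norm (\<lambda>i j. c * A i j) \<le> norm c * trace_norm A"
  proof (rule tn_via_eps[OF assms])
    fix u v assume A: "nuclear_rep A u v"
    show "trace_norm (\<lambda>i j. c * A i j) \<le> norm c * (\<Sum>n. l2norm (u n) * l2norm (v n))"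
      using tn_lower[OF nuc_scale(1)[OF A]] nuc_scale(2)[OF A] by simp
  qed simp
qed

lemma tc_zero: "trace_class (\<lambda>(i::'a) (j::'a). 0::complex)" "trace_norm (\<lambda>(i::'a) (j::'a). 0::complex) = 0"
proof -
  have "trace_class (\<lambda>i j. (0::complex) * rk (\<lambda>_::'a. 0) (\<lambda>_. 0) i j)"
    using tc_scale(1)[OF tc_rank_one(1)[OF l2_zero(1) l2_zero(1)]] .
  thus t: "trace_class (\<lambda>(i::'a) j. 0::complex)" by simp
  have "trace_norm (\<lambda>i j. (0::complex) * rk (\<lambda>_::'a. 0) (\<lambda>_. 0) i j) \<le> 0"
    using tc_scale(2)[OF tc_rank_one(1)[OF l2_zero(1) l2_zero(1)], of 0] by simp
  thus "trace_norm (\<lambda>(i::'a) (j::'a). 0::complex) = 0" using tn_nonneg[OF t] by simp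
qed

lemma tc_diff:
  assumes "trace_class A" "trace_class B"
  shows "trace_class (\<lambda>i j. A i j - B i j)"
proof -
  have "trace_class (\<lambda>i j. A i j + (-1) * B i j)"
    using tc_add(1)[OF assms(1) tc_scale(1)[OF assms(2)]] .
  thus ?thesis by simp
qed

lemma entry_le_tn:
  assumes "trace_class K" shows "norm (K i j) \<le> trace_norm K"
proof -
  have "norm (K i j) \<le> 1 * trace_norm K"
  proof (rule tn_via_eps[OF assms])
    fix u v assume A: "nuclear_rep K u v"
    have s: "(\<lambda>k. u k i * cnj (v k j)) sums K i j" and sm: "summable (\<lambda>k. l2norm (u k) * l2norm (v k))"
      and l2: "\<And>k. is_l2 (u k) \<and> is_l2 (v k)"
      using A unfolding nuclear_rep_def by auto
    have b: "\<And>k. norm (u k i * cnj (v k j)) \<le> l2norm (u k) * l2norm (v k)"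
      using l2 by (auto simp: norm_mult intro!: mult_mono l2_entry l2norm_nonneg)
    have sn: "summable (\<lambda>k. norm (u k i * cnj (v k j)))"
      by (rule summable_comparison_test[OF _ sm]) (use b in auto)
    have "norm (K i j) = norm (\<Sum>k. u k i * cnj (v k j))" using s by (simp add: sums_iff)
    also have "\<dots> \<le> (\<Sum>k. norm (u k i * cnj (v k j)))" by (rule summable_norm[OF sn])
    also have "\<dots> \<le> (\<Sum>k. l2norm (u k) * l2norm (v k))" by (rule suminf_le[OF b sn sm])
    finally show "norm (K i j) \<le> 1 * (\<Sum>k. l2norm (u k) * l2norm (v k))" by simp
  qed simp
  thus ?thesis by simp
qed

lemma nuc_tail:
  assumes A: "nuclear_rep K u v"
  shows "nuclear_rep (\<lambda>i j. K i j - (\<Sum>k<n. u k i * cnj (v k j))) (\<lambda>k. u (k + n)) (\<lambda>k. v (k + n))"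
    "(\<Sum>k. l2norm (u (k+n)) * l2norm (v (k+n))) = (\<Sum>k. l2norm (u k) * l2norm (v k)) - (\<Sum>k<n. l2norm (u k) * l2norm (v k))"
proof -
  have s: "(\<lambda>k. l2norm (u (k+n)) * l2norm (v (k+n))) sums ((\<Sum>k. l2norm (u k) * l2norm (v k)) - (\<Sum>k<n. l2norm (u k) * l2norm (v k)))"
    using A unfolding nuclear_rep_def by (intro sums_split_initial_segment) (auto simp: summable_sums)
  thus "(\<Sum>k. l2norm (u (k+n)) * l2norm (v (k+n))) = (\<Sum>k. l2norm (u k) * l2norm (v k)) - (\<Sum>k<n. l2norm (u k) * l2norm (v k))"
    by (simp add: sums_iff)
  show "nuclear_rep (\<lambda>i j. K i j - (\<Sum>k<n. u k i * cnj (v k j))) (\<lambda>k. u (k + n)) (\<lambda>k. v (k + n))"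
    unfolding nuclear_rep_def
  proof (intro conjI allI)
    fix k show "is_l2 (u (k + n))" "is_l2 (v (k + n))" using A unfolding nuclear_rep_def by auto
  next
    show "summable (\<lambda>k. l2norm (u (k + n)) * l2norm (v (k + n)))" using s by (rule sums_summable)
  next
    fix i j
    have "(\<lambda>k. u k i * cnj (v k j)) sums K i j" using A unfolding nuclear_rep_def by auto
    thus "(\<lambda>k. u (k + n) i * cnj (v (k + n) j)) sums (K i j - (\<Sum>k<n. u k i * cnj (v k j)))"
      by (rule sums_split_initial_segment)
  qed
qed

lemma tc_rank_sum:
  assumes "\<And>k. k \<in> S \<Longrightarrow> is_l2 (u k) \<and> is_l2 (v k)" "finite S"
  shows "trace_class (\<lambda>i j. \<Sum>k\<in>S. u k i * cnj (v k j))"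
  using assms(2,1)
proof (induction S rule: finite_induct)
  case empty thus ?case using tc_zero by simp
next
  case (insert x F)
  have "trace_class (\<lambda>i j. rk (u x) (v x) i j + (\<Sum>k\<in>F. u k i * cnj (v k j)))"
    using insert by (intro tc_add tc_rank_one) auto
  thus ?case using insert by (simp add: rk_def)
qed



lemma so_zero:
  assumes "bounded_superop T" shows "T (\<lambda>i j. 0) = (\<lambda>i j. 0)"
proof -
  have "T (\<lambda>i j. 0 * (0::complex)) = (\<lambda>i j. 0 * T (\<lambda>i j. 0) i j)"
    using assms tc_zero(1) unfolding bounded_superop_def by blast
  thus ?thesis by simp
qed

lemma so_add:
  assumes "bounded_superop T" "trace_class A" "trace_class B"
  shows "T (\<lambda>i j. A i j + B i j) = (\<lambda>i j. T A i j + T B i j)"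
  using assms unfolding bounded_superop_def by blast

lemma so_scale:
  assumes "bounded_superop T" "trace_class A"
  shows "T (\<lambda>i j. c * A i j) = (\<lambda>i j. c * T A i j)"
  using assms unfolding bounded_superop_def by blast

lemma so_tc:
  assumes "bounded_superop T" "trace_class A" shows "trace_class (T A)"
  using assms unfolding bounded_superop_def by blast

lemma so_diff:
  assumes "bounded_superop T" "trace_class A" "trace_class B"
  shows "T (\<lambda>i j. A i j - B i j) = (\<lambda>i j. T A i j - T B i j)"
proof -
  have "T (\<lambda>i j. A i j + (-1) * B i j) = (\<lambda>i j. T A i j + T (\<lambda>i j. (-1) * B i j) i j)"
    using assms by (intro so_add tc_scale)
  also have "T (\<lambda>i j. (-1) * B i j) = (\<lambda>i j. (-1) * T B i j)" using assms by (intro so_scale)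
  finally show ?thesis by simp
qed

lemma tc_sum:
  assumes "finite S" "\<And>s. s \<in> S \<Longrightarrow> trace_class (f s)"
  shows "trace_class (\<lambda>i j. \<Sum>s\<in>S. f s i j)"
  using assms
proof (induction S rule: finite_induct)
  case empty thus ?case using tc_zero by simp
next
  case (insert x F)
  have "trace_class (\<lambda>i j. f x i j + (\<Sum>s\<in>F. f s i j))"
    using insert by (intro tc_add) auto
  thus ?case using insert by simp
qed

lemma so_sum:
  assumes "bounded_superop T" "finite S" "\<And>s. s \<in> S \<Longrightarrow> trace_class (f s)"
  shows "T (\<lambda>i j. \<Sum>s\<in>S. f s i j) = (\<lambda>i j. \<Sum>s\<in>S. T (f s) i j)"
  using assms(2,3)
proof (induction S rule: finite_induct)
  case empty thus ?case using so_zero[OF assms(1)] by simp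
next
  case (insert x F)
  have "T (\<lambda>i j. f x i j + (\<Sum>s\<in>F. f s i j)) = (\<lambda>i j. T (f x) i j + T (\<lambda>i j. \<Sum>s\<in>F. f s i j) i j)"
    using insert assms(1) by (intro so_add tc_sum) auto
  thus ?case using insert by simp
qed

lemma so_norm:
  fixes T :: "('a \<Rightarrow> 'a \<Rightarrow> complex) \<Rightarrow> ('a \<Rightarrow> 'a \<Rightarrow> complex)"
  assumes T: "bounded_superop T" and A: "trace_class A"
  shows "trace_norm (T A) \<le> superop_norm T * trace_norm A"
proof -
  obtain C0 where C0: "\<And>A. trace_class A \<Longrightarrow> trace_norm (T A) \<le> C0 * trace_norm A"
    using T unfolding bounded_superop_def by blast
  let ?Set = "{A::'a \<Rightarrow> 'a \<Rightarrow> complex. trace_class A \<and> trace_norm A \<le> 1}"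
  have bdd: "bdd_above ((\<lambda>A. trace_norm (T A)) ` ?Set)"
  proof (rule bdd_aboveI2)
    fix B assume "B \<in> ?Set"
    hence B: "trace_class B" "trace_norm B \<le> 1" by auto
    have "trace_norm (T B) \<le> C0 * trace_norm B" using C0 B by blast
    also have "\<dots> \<le> max C0 0 * trace_norm B" using tn_nonneg[OF B(1)] by (intro mult_right_mono) auto
    also have "\<dots> \<le> max C0 0 * 1" using B by (intro mult_left_mono) auto
    finally show "trace_norm (T B) \<le> max C0 0" by simp
  qed
  have up: "\<And>B. trace_class B \<Longrightarrow> trace_norm B \<le> 1 \<Longrightarrow> trace_norm (T B) \<le> superop_norm T"
    unfolding superop_norm_def by (rule cSUP_upper[OF _ bdd]) auto
  have z: "trace_norm (\<lambda>(i::'a) (j::'a). 0::complex) \<le> 1" using tc_zero(2)[where 'a='a] by simp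
  have "trace_norm (T (\<lambda>i j. 0)) \<le> superop_norm T"
    using up[OF tc_zero(1) z] .
  hence S0: "0 \<le> superop_norm T"
    using tn_nonneg[OF so_tc[OF T tc_zero(1)]] by linarith
  show ?thesis
  proof (rule field_le_epsilon)
    fix e :: real assume e: "0 < e"
    define t where "t = trace_norm A + e / (superop_norm T + 1)"
    have tA: "0 \<le> trace_norm A" using tn_nonneg[OF A] .
    have t0: "t > 0" unfolding t_def using e S0 tA by (simp add: add_nonneg_pos)
    define B where "B = (\<lambda>i j. (1/t) * A i j)"
    have Btc: "trace_class B" unfolding B_def using tc_scale(1)[OF A] .
    have "trace_norm B \<le> norm (complex_of_real (1/t)) * trace_norm A" unfolding B_def by (rule tc_scale(2)[OF A])
    also have "\<dots> = trace_norm A / t" using t0 by (simp add: norm_divide)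
    also have "\<dots> \<le> 1" using t0 unfolding t_def using e S0 by (simp add: divide_le_eq)
    finally have Bn: "trace_norm B \<le> 1" .
    have TB: "T B = (\<lambda>i j. (1/t) * T A i j)" unfolding B_def using so_scale[OF T A] .
    have TA: "T A = (\<lambda>i j. complex_of_real t * T B i j)"
      unfolding TB using t0 by (auto simp: field_simps)
    have "trace_norm (T A) \<le> norm (complex_of_real t) * trace_norm (T B)"
      unfolding TA by (rule tc_scale(2)[OF so_tc[OF T Btc]])
    also have "\<dots> = t * trace_norm (T B)" using t0 by simp
    also have "\<dots> \<le> t * superop_norm T" using t0 up[OF Btc Bn] by (intro mult_left_mono) auto
    also have "\<dots> = superop_norm T * trace_norm A + e * (superop_norm T / (superop_norm T + 1))"
      unfolding t_def using S0 by (simp add: algebra_simps)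
    also have "\<dots> \<le> superop_norm T * trace_norm A + e * 1"
    proof -
      have "superop_norm T / (superop_norm T + 1) \<le> 1" using S0 by simp
      thus ?thesis using e by (intro add_left_mono mult_left_mono) auto
    qed
    finally show "trace_norm (T A) \<le> superop_norm T * trace_norm A + e" by simp
  qed
qed

lemma tn_entrywise:
  fixes K :: "'a::countable \<Rightarrow> 'a \<Rightarrow> complex"
  assumes sm: "(\<lambda>(i,j). norm (K i j)) summable_on UNIV"
  shows "trace_class K" "trace_norm K \<le> (\<Sum>\<^sub>\<infinity>(i,j). norm (K i j))"
proof -
  define p where "p n = (from_nat n :: 'a \<times> 'a)" for n
  define R where "R = range (to_nat :: 'a \<times> 'a \<Rightarrow> nat)"
  define u where "u n = (if n \<in> R then (\<lambda>i'. if i' = fst (p n) then K (fst (p n)) (snd (p n)) else 0) else (\<lambda>_. 0))" for n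
  define v where "v n = (if n \<in> R then (\<lambda>j'. if j' = snd (p n) then (1::complex) else 0) else (\<lambda>_. 0))" for n
  define h where "h n = (if n \<in> R then norm (K (fst (p n)) (snd (p n))) else 0)" for n
  define f where "f = (\<lambda>(i,j). norm (K i j))"
  have l2: "is_l2 (u n) \<and> is_l2 (v n)" for n
    unfolding u_def v_def by (auto simp: l2_delta l2_zero)
  have hn: "l2norm (u n) * l2norm (v n) = h n" for n
    unfolding u_def v_def h_def by (auto simp: l2_delta l2_zero)
  have trm: "u n i * cnj (v n j) = (if n = to_nat (i,j) then K i j else 0)" for n i j
  proof (cases "n \<in> R")
    case True
    then obtain q :: "'a \<times> 'a" where q: "n = to_nat q" unfolding R_def by blast
    hence pn: "p n = q" unfolding p_def by simp
    have "(i = fst q \<and> j = snd q) \<longleftrightarrow> n = to_nat (i,j)"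
      unfolding q by (cases q) auto
    thus ?thesis using True unfolding u_def v_def pn by auto
  next
    case False
    hence "n \<noteq> to_nat (i,j)" unfolding R_def by blast
    thus ?thesis using False unfolding u_def v_def by simp
  qed
  have hto: "h \<circ> to_nat = f"
    by (auto simp: h_def f_def p_def R_def)
  have "(f has_sum infsum f UNIV) UNIV" using sm unfolding f_def by simp
  hence "((h \<circ> (to_nat :: 'a \<times> 'a \<Rightarrow> nat)) has_sum infsum f UNIV) UNIV" unfolding hto .
  hence "(h has_sum infsum f UNIV) ((to_nat :: 'a \<times> 'a \<Rightarrow> nat) ` UNIV)"
    by (subst has_sum_reindex) (auto simp: inj_on_def)
  hence "(h has_sum infsum f UNIV) UNIV"
    by (subst (asm) has_sum_cong_neutral[of UNIV _ h]) (auto simp: h_def R_def)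
  hence hs: "h sums infsum f UNIV" by (rule has_sum_imp_sums)
  have nr: "nuclear_rep K u v" unfolding nuclear_rep_def
  proof (intro conjI allI)
    fix k show "is_l2 (u k)" "is_l2 (v k)" using l2 by auto
  next
    show "summable (\<lambda>k. l2norm (u k) * l2norm (v k))" unfolding hn using hs by (rule sums_summable)
  next
    fix i j
    show "(\<lambda>k. u k i * cnj (v k j)) sums K i j"
      unfolding trm using sums_single[of "to_nat (i,j)" "\<lambda>_. K i j"] by simp
  qed
  show "trace_class K" using nr unfolding trace_class_def by blast
  have "trace_norm K \<le> (\<Sum>k. l2norm (u k) * l2norm (v k))" using tn_lower[OF nr] .
  also have "\<dots> = infsum f UNIV" unfolding hn using hs by (simp add: sums_iff)
  finally show "trace_norm K \<le> (\<Sum>\<^sub>\<infinity>(i,j). norm (K i j))" unfolding f_def .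
qed

lemma vec_norm_L2: "vec_norm w = L2_set (\<lambda>a. norm (w a)) UNIV"
  by (simp add: vec_norm_def L2_set_def)

lemma vec_norm_nonneg: "0 \<le> vec_norm w" unfolding vec_norm_L2 by simp

lemma vec_norm_entry: "norm (w a) \<le> vec_norm (w::'n::finite \<Rightarrow> complex)"
  unfolding vec_norm_L2 by (rule member_le_L2_set) auto

lemma vec_norm_le_sum: "vec_norm (w::'n::finite \<Rightarrow> complex) \<le> (\<Sum>a\<in>UNIV. norm (w a))"
  unfolding vec_norm_L2 by (rule L2_set_le_sum) auto

lemma vec_norm_delta: "vec_norm (\<lambda>a'::'n::finite. if a' = a then c else 0) = norm c"
proof -
  have "(\<Sum>a'\<in>UNIV. (norm (if a' = a then c else 0))\<^sup>2) = (\<Sum>a'\<in>UNIV. if a' = a then (norm c)\<^sup>2 else 0)"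
    by (rule sum.cong) auto
  also have "\<dots> = (norm c)\<^sup>2" by simp
  finally show ?thesis unfolding vec_norm_def by simp
qed

lemma matvec_le:
  fixes M :: "'n::finite \<Rightarrow> 'n \<Rightarrow> complex"
  assumes "vec_norm w \<le> 1"
  shows "vec_norm (\<lambda>a. \<Sum>b\<in>UNIV. M a b * w b) \<le> (\<Sum>a\<in>UNIV. \<Sum>b\<in>UNIV. norm (M a b))"
proof -
  have "vec_norm (\<lambda>a. \<Sum>b\<in>UNIV. M a b * w b) \<le> (\<Sum>a\<in>UNIV. norm (\<Sum>b\<in>UNIV. M a b * w b))"
    by (rule vec_norm_le_sum)
  also have "\<dots> \<le> (\<Sum>a\<in>UNIV. \<Sum>b\<in>UNIV. norm (M a b))"
  proof (intro sum_mono)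
    fix a
    have "norm (\<Sum>b\<in>UNIV. M a b * w b) \<le> (\<Sum>b\<in>UNIV. norm (M a b * w b))" by (rule norm_sum)
    also have "\<dots> \<le> (\<Sum>b\<in>UNIV. norm (M a b))"
    proof (intro sum_mono)
      fix b
      have "norm (w b) \<le> 1" using vec_norm_entry[of w b] assms by linarith
      thus "norm (M a b * w b) \<le> norm (M a b)" by (simp add: norm_mult mult_left_le)
    qed
    finally show "norm (\<Sum>b\<in>UNIV. M a b * w b) \<le> (\<Sum>b\<in>UNIV. norm (M a b))" .
  qed
  finally show ?thesis .
qed

lemma mat_bdd: "bdd_above ((\<lambda>w. vec_norm (\<lambda>a. \<Sum>b\<in>UNIV. (M::'n::finite \<Rightarrow> 'n \<Rightarrow> complex) a b * w b)) ` {w. vec_norm (w::'n::finite \<Rightarrow> complex) \<le> 1})"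
  by (rule bdd_aboveI2[where M = "\<Sum>a\<in>UNIV. \<Sum>b\<in>UNIV. norm (M a b)"]) (auto intro: matvec_le)
lemma vec_norm_zero: "vec_norm (\<lambda>_::'n::finite. 0) = 0"
  by (simp add: vec_norm_def)

lemma mat_opnorm_le_sum:
  "mat_opnorm (M::'n::finite \<Rightarrow> 'n \<Rightarrow> complex) \<le> (\<Sum>a\<in>UNIV. \<Sum>b\<in>UNIV. norm (M a b))"
  unfolding mat_opnorm_def
proof (rule cSUP_least)
  have "(\<lambda>_. 0) \<in> {w. vec_norm (w::'n \<Rightarrow> complex) \<le> 1}" by (simp add: vec_norm_def)
  thus "{w. vec_norm (w::'n \<Rightarrow> complex) \<le> 1} \<noteq> {}" by blast
qed (auto intro: matvec_le)

lemma mat_entry_le: "norm (M a b) \<le> mat_opnorm (M::'n::finite \<Rightarrow> 'n \<Rightarrow> complex)"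
proof -
  define w where "w = (\<lambda>b'::'n. if b' = b then (1::complex) else 0)"
  have w1: "vec_norm w \<le> 1" unfolding w_def vec_norm_delta by simp
  have Mw: "(\<lambda>a. \<Sum>b'\<in>UNIV. M a b' * w b') = (\<lambda>a. M a b)"
  proof
    fix a
    have "(\<Sum>b'\<in>UNIV. M a b' * w b') = (\<Sum>b'\<in>UNIV. if b' = b then M a b' else 0)"
      unfolding w_def by (rule sum.cong) auto
    thus "(\<Sum>b'\<in>UNIV. M a b' * w b') = M a b" by simp
  qed
  have "norm (M a b) \<le> vec_norm (\<lambda>a. M a b)" by (rule vec_norm_entry)
  also have "\<dots> = vec_norm (\<lambda>a. \<Sum>b'\<in>UNIV. M a b' * w b')" unfolding Mw ..
  also have "\<dots> \<le> mat_opnorm M" unfolding mat_opnorm_def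
    by (rule cSUP_upper[OF _ mat_bdd]) (use w1 in auto)
  finally show ?thesis .
qed

lemma mat_opnorm_unit:
  "mat_opnorm (\<lambda>a' b'::'n::finite. if a' = a \<and> b' = b then (1::complex) else 0) \<le> 1"
  unfolding mat_opnorm_def
proof (rule cSUP_least)
  have "(\<lambda>_. 0) \<in> {w. vec_norm (w::'n \<Rightarrow> complex) \<le> 1}" by (simp add: vec_norm_def)
  thus "{w. vec_norm (w::'n \<Rightarrow> complex) \<le> 1} \<noteq> {}" by blast
next
  fix w :: "'n \<Rightarrow> complex" assume "w \<in> {w. vec_norm w \<le> 1}"
  hence w: "vec_norm w \<le> 1" by simp
  have e: "(\<lambda>a'. \<Sum>b'\<in>UNIV. (if a' = a \<and> b' = b then 1 else 0) * w b') = (\<lambda>a'. if a' = a then w b else 0)"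
  proof
    fix a'
    have "(\<Sum>b'\<in>UNIV. (if a' = a \<and> b' = b then 1 else 0) * w b') = (\<Sum>b'\<in>UNIV. if b' = b then (if a' = a then w b' else 0) else 0)"
      by (rule sum.cong) auto
    thus "(\<Sum>b'\<in>UNIV. (if a' = a \<and> b' = b then 1 else 0) * w b') = (if a' = a then w b else 0)" by simp
  qed
  show "vec_norm (\<lambda>a'. \<Sum>b'\<in>UNIV. (if a' = a \<and> b' = b then 1 else 0) * w b') \<le> 1"
    unfolding e vec_norm_delta using vec_norm_entry[of w b] w by linarith
qed



definition goodP :: "(real \<Rightarrow> ('a \<Rightarrow> 'a \<Rightarrow> complex) \<Rightarrow> ('a \<Rightarrow> 'a \<Rightarrow> complex)) \<Rightarrow> ('a \<Rightarrow> 'a \<Rightarrow> complex) \<Rightarrow> bool" where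
  "goodP T A \<longleftrightarrow> trace_class A \<and> ((\<lambda>l. trace_norm (T l A)) \<longlongrightarrow> 0) (at_right 0)"

lemma goodP_add:
  assumes bdd: "\<forall>l>0. bounded_superop (T l)" and A: "goodP T A" and B: "goodP T B"
  shows "goodP T (\<lambda>i j. A i j + B i j)"
proof -
  have tA: "trace_class A" and tB: "trace_class B" using A B unfolding goodP_def by auto
  have "((\<lambda>l. trace_norm (T l (\<lambda>i j. A i j + B i j))) \<longlongrightarrow> 0) (at_right 0)"
  proof (rule tendsto_sandwich[where f = "\<lambda>_. 0" and h = "\<lambda>l. trace_norm (T l A) + trace_norm (T l B)"])
    show "\<forall>\<^sub>F l in at_right 0. 0 \<le> trace_norm (T l (\<lambda>i j. A i j + B i j))"
      using eventually_at_right_less[of "0::real"]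
    proof (rule eventually_mono)
      fix l :: real assume "0 < l"
      hence b: "bounded_superop (T l)" using bdd by auto
      show "0 \<le> trace_norm (T l (\<lambda>i j. A i j + B i j))" by (rule tn_nonneg[OF so_tc[OF b tc_add(1)[OF tA tB]]])
    qed
    show "\<forall>\<^sub>F l in at_right 0. trace_norm (T l (\<lambda>i j. A i j + B i j)) \<le> trace_norm (T l A) + trace_norm (T l B)"
      using eventually_at_right_less[of "0::real"]
    proof (rule eventually_mono)
      fix l :: real assume "0 < l"
      hence b: "bounded_superop (T l)" using bdd by auto
      show "trace_norm (T l (\<lambda>i j. A i j + B i j)) \<le> trace_norm (T l A) + trace_norm (T l B)"
        unfolding so_add[OF b tA tB] using so_tc[OF b tA] so_tc[OF b tB] by (rule tc_add(2))
    qed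
    show "((\<lambda>_. 0) \<longlongrightarrow> (0::real)) (at_right 0)" by simp
    show "((\<lambda>l. trace_norm (T l A) + trace_norm (T l B)) \<longlongrightarrow> 0) (at_right 0)"
    proof -
      have "((\<lambda>l. trace_norm (T l A)) \<longlongrightarrow> 0) (at_right 0)" "((\<lambda>l. trace_norm (T l B)) \<longlongrightarrow> 0) (at_right 0)"
        using A B unfolding goodP_def by auto
      from tendsto_add[OF this] show ?thesis by simp
    qed
  qed
  thus ?thesis unfolding goodP_def using tc_add(1)[OF tA tB] by simp
qed

lemma goodP_scale:
  assumes bdd: "\<forall>l>0. bounded_superop (T l)" and A: "goodP T A"
  shows "goodP T (\<lambda>i j. c * A i j)"
proof -
  have tA: "trace_class A" using A unfolding goodP_def by auto
  have "((\<lambda>l. trace_norm (T l (\<lambda>i j. c * A i j))) \<longlongrightarrow> 0) (at_right 0)"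
  proof (rule tendsto_sandwich[where f = "\<lambda>_. 0" and h = "\<lambda>l. norm c * trace_norm (T l A)"])
    show "\<forall>\<^sub>F l in at_right 0. 0 \<le> trace_norm (T l (\<lambda>i j. c * A i j))"
      using eventually_at_right_less[of "0::real"]
    proof (rule eventually_mono)
      fix l :: real assume "0 < l"
      hence b: "bounded_superop (T l)" using bdd by auto
      show "0 \<le> trace_norm (T l (\<lambda>i j. c * A i j))" by (rule tn_nonneg[OF so_tc[OF b tc_scale(1)[OF tA]]])
    qed
    show "\<forall>\<^sub>F l in at_right 0. trace_norm (T l (\<lambda>i j. c * A i j)) \<le> norm c * trace_norm (T l A)"
      using eventually_at_right_less[of "0::real"]
    proof (rule eventually_mono)
      fix l :: real assume "0 < l"
      hence b: "bounded_superop (T l)" using bdd by auto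
      show "trace_norm (T l (\<lambda>i j. c * A i j)) \<le> norm c * trace_norm (T l A)"
        unfolding so_scale[OF b tA] using so_tc[OF b tA] by (rule tc_scale(2))
    qed
    show "((\<lambda>_. 0) \<longlongrightarrow> (0::real)) (at_right 0)" by simp
    show "((\<lambda>l. norm c * trace_norm (T l A)) \<longlongrightarrow> 0) (at_right 0)"
    proof -
      have "((\<lambda>l. trace_norm (T l A)) \<longlongrightarrow> 0) (at_right 0)" using A unfolding goodP_def by auto
      from tendsto_mult_right_zero[OF this] show ?thesis .
    qed
  qed
  thus ?thesis unfolding goodP_def using tc_scale(1)[OF tA] by simp
qed

lemma goodP_zero:
  assumes bdd: "\<forall>l>0. bounded_superop (T l)"
  shows "goodP T (\<lambda>i j. 0)"
proof -
  have "((\<lambda>l. trace_norm (T l (\<lambda>i j. 0))) \<longlongrightarrow> 0) (at_right 0)"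
  proof (rule tendsto_sandwich[where f = "\<lambda>_. 0" and h = "\<lambda>_. 0"])
    show "\<forall>\<^sub>F l in at_right 0. 0 \<le> trace_norm (T l (\<lambda>i j. 0))"
      using eventually_at_right_less[of "0::real"]
    proof (rule eventually_mono)
      fix l :: real assume "0 < l"
      hence b: "bounded_superop (T l)" using bdd by auto
      show "0 \<le> trace_norm (T l (\<lambda>i j. 0))" unfolding so_zero[OF b] tc_zero(2) by simp
    qed
    show "\<forall>\<^sub>F l in at_right 0. trace_norm (T l (\<lambda>i j. 0)) \<le> 0"
      using eventually_at_right_less[of "0::real"]
    proof (rule eventually_mono)
      fix l :: real assume "0 < l"
      hence b: "bounded_superop (T l)" using bdd by auto
      show "trace_norm (T l (\<lambda>i j. 0)) \<le> 0" unfolding so_zero[OF b] tc_zero(2) by simp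
    qed
  qed simp_all
  thus ?thesis unfolding goodP_def using tc_zero(1) by simp
qed

lemma goodP_sum:
  assumes bdd: "\<forall>l>0. bounded_superop (T l)" and "finite S" "\<And>s. s \<in> S \<Longrightarrow> goodP T (f s)"
  shows "goodP T (\<lambda>i j. \<Sum>s\<in>S. f s i j)"
  using assms(2,3)
proof (induction S rule: finite_induct)
  case empty thus ?case using goodP_zero[OF bdd] by simp
next
  case (insert x F)
  have "goodP T (\<lambda>i j. f x i j + (\<Sum>s\<in>F. f s i j))"
    using insert by (intro goodP_add[OF bdd]) auto
  thus ?case using insert by simp
qed

lemma goodP_lim:
  assumes bdd: "\<forall>l>0. bounded_superop (T l)" and C: "\<forall>l>0. superop_norm (T l) \<le> C"
    and A: "trace_class A"
    and appr: "\<And>e. e > 0 \<Longrightarrow> \<exists>B. goodP T B \<and> trace_norm (\<lambda>i j. A i j - B i j) \<le> e"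
  shows "goodP T A"
proof -
  define C' where "C' = max C 1"
  have C'0: "C' > 0" unfolding C'_def by simp
  have "((\<lambda>l. trace_norm (T l A)) \<longlongrightarrow> 0) (at_right 0)"
  proof (rule tendstoI)
    fix e :: real assume e: "e > 0"
    obtain B where B: "goodP T B" "trace_norm (\<lambda>i j. A i j - B i j) \<le> e / (3 * C')"
      using appr[of "e / (3 * C')"] e C'0 by auto
    have tB: "trace_class B" using B unfolding goodP_def by auto
    have tD: "trace_class (\<lambda>i j. A i j - B i j)" using tc_diff[OF A tB] .
    have ev: "\<forall>\<^sub>F l in at_right 0. dist (trace_norm (T l B)) 0 < e / 3"
    proof -
      have "((\<lambda>l. trace_norm (T l B)) \<longlongrightarrow> 0) (at_right 0)" using B(1) unfolding goodP_def by auto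
      from tendstoD[OF this, of "e/3"] show ?thesis using e by simp
    qed
    show "\<forall>\<^sub>F l in at_right 0. dist (trace_norm (T l A)) 0 < e"
      using eventually_conj[OF ev eventually_at_right_less[of "0::real"]]
    proof (rule eventually_mono)
      fix l :: real assume l: "dist (trace_norm (T l B)) 0 < e / 3 \<and> 0 < l"
      hence b: "bounded_superop (T l)" using bdd by auto
      have Aeq: "A = (\<lambda>i j. B i j + (\<lambda>i j. A i j - B i j) i j)" by simp
      have TA: "T l A = (\<lambda>i j. T l B i j + T l (\<lambda>i j. A i j - B i j) i j)"
        by (subst Aeq, rule so_add[OF b tB tD])
      have "trace_norm (T l A) \<le> trace_norm (T l B) + trace_norm (T l (\<lambda>i j. A i j - B i j))"
        unfolding TA using so_tc[OF b tB] so_tc[OF b tD] by (rule tc_add(2))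
      also have "trace_norm (T l (\<lambda>i j. A i j - B i j)) \<le> superop_norm (T l) * trace_norm (\<lambda>i j. A i j - B i j)"
        by (rule so_norm[OF b tD])
      also have "\<dots> \<le> C' * trace_norm (\<lambda>i j. A i j - B i j)"
        using C l tn_nonneg[OF tD] unfolding C'_def by (intro mult_right_mono) auto
      also have "\<dots> \<le> C' * (e / (3 * C'))" using B(2) C'0 by (intro mult_left_mono) auto
      also have "\<dots> = e / 3" using C'0 by simp
      finally have "trace_norm (T l A) \<le> trace_norm (T l B) + e / 3" by simp
      moreover have "trace_norm (T l B) < e / 3"
      proof -
        have "\<bar>trace_norm (T l B)\<bar> < e / 3" using l by (simp add: dist_real_def)
        thus ?thesis by linarith
      qed
      moreover have "0 \<le> trace_norm (T l A)" using tn_nonneg[OF so_tc[OF b A]] .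
      ultimately show "dist (trace_norm (T l A)) 0 < e" by (simp add: dist_real_def)
    qed
  qed
  thus ?thesis unfolding goodP_def using A by simp
qed



definition eu :: "'n \<Rightarrow> 'n \<Rightarrow> 'n \<Rightarrow> 'n \<Rightarrow> complex" where
  "eu a b = (\<lambda>a' b'. if a' = a \<and> b' = b then 1 else 0)"

lemma elem_op_apply: "elem_op M x0 y0 (x,a) (y,b) = (if x = x0 \<and> y = y0 then M a b else 0)"
  by (simp add: elem_op_def)

lemma elem_unit:
  fixes x0 y0 :: "int ^ 'd::finite" and a b :: 'n
  shows "elem_op (eu a b) x0 y0 = (\<lambda>i j. if i = (x0,a) \<and> j = (y0,b) then 1 else 0)"
proof (intro ext)
  fix i j :: "(int ^ 'd) \<times> 'n"
  show "elem_op (eu a b) x0 y0 i j = (if i = (x0,a) \<and> j = (y0,b) then 1 else 0)"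
    by (cases i, cases j) (auto simp: elem_op_apply eu_def)
qed

lemma elem_tc:
  fixes M :: "'n::finite \<Rightarrow> 'n \<Rightarrow> complex" and x0 y0 :: "int ^ 'd::finite"
  shows "trace_class (elem_op M x0 y0)" "trace_norm (elem_op M x0 y0) \<le> (\<Sum>a\<in>UNIV. \<Sum>b\<in>UNIV. norm (M a b))"
proof -
  define \<iota> where "\<iota> = (\<lambda>z::'n \<times> 'n. (((x0, fst z), (y0, snd z)) :: ('d,'n) site \<times> ('d,'n) site))"
  define Fs where "Fs = range \<iota>"
  define f where "f = (\<lambda>(i,j). norm (elem_op M x0 y0 i j))"
  have inj: "inj \<iota>" unfolding \<iota>_def by (auto simp: inj_on_def prod_eq_iff)
  have fin: "finite Fs" unfolding Fs_def by simp
  have z: "f p = 0" if "p \<notin> Fs" for p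
  proof -
    obtain x a y b where p: "p = ((x,a),(y,b))" by (metis prod.exhaust)
    have "\<not> (x = x0 \<and> y = y0)"
    proof
      assume "x = x0 \<and> y = y0"
      hence "p = \<iota> (a,b)" unfolding p \<iota>_def by simp
      thus False using that unfolding Fs_def by blast
    qed
    thus ?thesis unfolding p f_def by (auto simp: elem_op_apply)
  qed
  have "f summable_on Fs" using fin by simp
  hence sm: "f summable_on UNIV"
    by (subst (asm) summable_on_cong_neutral[of UNIV Fs f f]) (auto simp: z)
  have "infsum f UNIV = infsum f Fs"
    by (rule infsum_cong_neutral) (auto simp: z)
  also have "\<dots> = sum f Fs" using fin by simp
  also have "\<dots> = sum (f \<circ> \<iota>) UNIV" unfolding Fs_def using inj by (simp add: sum.reindex)
  also have "\<dots> = (\<Sum>z\<in>UNIV. norm (M (fst z) (snd z)))"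
    by (rule sum.cong) (auto simp: f_def \<iota>_def elem_op_apply)
  also have "\<dots> = (\<Sum>a\<in>UNIV. \<Sum>b\<in>UNIV. norm (M a b))"
    by (simp add: sum.cartesian_product case_prod_beta flip: UNIV_Times_UNIV)
  finally have inf: "infsum f UNIV = (\<Sum>a\<in>UNIV. \<Sum>b\<in>UNIV. norm (M a b))" .
  show "trace_class (elem_op M x0 y0)" using tn_entrywise(1) sm unfolding f_def by blast
  show "trace_norm (elem_op M x0 y0) \<le> (\<Sum>a\<in>UNIV. \<Sum>b\<in>UNIV. norm (M a b))"
    using tn_entrywise(2)[of "elem_op M x0 y0"] sm inf unfolding f_def by simp
qed

lemma matmap_bdd:
  fixes S :: "('d::finite,'n::finite) kernel \<Rightarrow> ('d,'n) kernel"
  assumes b: "bounded_superop S"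
  shows "bdd_above ((\<lambda>M. mat_opnorm (superop_kernel S x0 y0 x y M)) ` {M. mat_opnorm M \<le> 1})"
proof -
  obtain C0 where C0: "\<And>A. trace_class A \<Longrightarrow> trace_norm (S A) \<le> C0 * trace_norm A"
    using b unfolding bounded_superop_def by blast
  define c where "c = max C0 0 * (\<Sum>a\<in>(UNIV::'n set). \<Sum>b\<in>(UNIV::'n set). (1::real))"
  show ?thesis
  proof (rule bdd_aboveI2[where M = "\<Sum>a'\<in>(UNIV::'n set). \<Sum>b'\<in>(UNIV::'n set). c"])
    fix M :: "'n \<Rightarrow> 'n \<Rightarrow> complex" assume "M \<in> {M. mat_opnorm M \<le> 1}"
    hence M1: "mat_opnorm M \<le> 1" by simp
    have E: "trace_class (elem_op M x0 y0)" by (rule elem_tc(1))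
    have ent: "norm (superop_kernel S x0 y0 x y M a' b') \<le> c" for a' b'
    proof -
      have "norm (superop_kernel S x0 y0 x y M a' b') = norm (S (elem_op M x0 y0) (x,a') (y,b'))"
        by (simp add: superop_kernel_def)
      also have "\<dots> \<le> trace_norm (S (elem_op M x0 y0))" by (rule entry_le_tn[OF so_tc[OF b E]])
      also have "\<dots> \<le> C0 * trace_norm (elem_op M x0 y0)" by (rule C0[OF E])
      also have "\<dots> \<le> max C0 0 * trace_norm (elem_op M x0 y0)"
        using tn_nonneg[OF E] by (intro mult_right_mono) auto
      also have "\<dots> \<le> max C0 0 * (\<Sum>a\<in>UNIV. \<Sum>b\<in>UNIV. norm (M a b))"
        by (intro mult_left_mono elem_tc(2)) auto
      also have "\<dots> \<le> c" unfolding c_def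
      proof (intro mult_left_mono sum_mono)
        fix a b show "norm (M a b) \<le> 1" using mat_entry_le[of M a b] M1 by linarith
      qed auto
      finally show ?thesis .
    qed
    have "mat_opnorm (superop_kernel S x0 y0 x y M) \<le> (\<Sum>a'\<in>UNIV. \<Sum>b'\<in>UNIV. norm (superop_kernel S x0 y0 x y M a' b'))"
      by (rule mat_opnorm_le_sum)
    also have "\<dots> \<le> (\<Sum>a'\<in>(UNIV::'n set). \<Sum>b'\<in>(UNIV::'n set). c)"
      by (intro sum_mono ent)
    finally show "mat_opnorm (superop_kernel S x0 y0 x y M) \<le> (\<Sum>a'\<in>(UNIV::'n set). \<Sum>b'\<in>(UNIV::'n set). c)" .
  qed
qed

lemma matmap_entry:
  fixes S :: "('d::finite,'n::finite) kernel \<Rightarrow> ('d,'n) kernel"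
  assumes b: "bounded_superop S"
  shows "norm (S (elem_op (eu a b) x0 y0) (x,a') (y,b')) \<le> matmap_norm (superop_kernel S x0 y0 x y)"
proof -
  have "norm (S (elem_op (eu a b) x0 y0) (x,a') (y,b')) = norm (superop_kernel S x0 y0 x y (eu a b) a' b')"
    by (simp add: superop_kernel_def)
  also have "\<dots> \<le> mat_opnorm (superop_kernel S x0 y0 x y (eu a b))" by (rule mat_entry_le)
  also have "\<dots> \<le> matmap_norm (superop_kernel S x0 y0 x y)" unfolding matmap_norm_def
    by (rule cSUP_upper[OF _ matmap_bdd[OF b]]) (use mat_opnorm_unit in \<open>auto simp: eu_def\<close>)
  finally show ?thesis .
qed



lemma step1:
  fixes T :: "real \<Rightarrow> ('d::finite, 'n::finite) kernel \<Rightarrow> ('d,'n) kernel"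
  assumes bdd: "\<forall>l>0. bounded_superop (T l)" and pt: "pt_lim_zero T"
  shows "goodP T (elem_op (eu a b) x0 y0)"
proof -
  define D where "D = elem_op (eu a b) x0 y0"
  have tD: "trace_class D" unfolding D_def by (rule elem_tc(1))
  define h where "h l = (\<lambda>(x,y). matmap_norm (superop_kernel (T l) x0 y0 x y))" for l
  define N where "N = real (card (UNIV :: ('n \<times> 'n) set))"
  have ev: "\<forall>\<^sub>F l in at_right 0. h l summable_on UNIV"
    and lim: "((\<lambda>l. infsum (h l) UNIV) \<longlongrightarrow> 0) (at_right 0)"
    using pt unfolding pt_lim_zero_def h_def by auto
  have key: "trace_norm (T l D) \<le> N * infsum (h l) UNIV" if l: "l > 0" "h l summable_on UNIV" for l
  proof -
    have b: "bounded_superop (T l)" using bdd l by auto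
    define K where "K = T l D"
    define g where "g = (\<lambda>p::('d,'n) site \<times> ('d,'n) site. h l (fst (fst p), fst (snd p)))"
    define B where "B z = (\<lambda>q. ((fst q, fst z), (snd q, snd z))) ` (UNIV :: ((int ^ 'd) \<times> (int ^ 'd)) set)" for z :: "'n \<times> 'n"
    have ent: "norm (K (fst p) (snd p)) \<le> g p" for p
    proof -
      obtain x a' y b' where p: "p = ((x,a'),(y,b'))" by (metis prod.exhaust)
      show ?thesis unfolding p K_def D_def g_def h_def using matmap_entry[OF b] by simp
    qed
    have hs: "(h l has_sum infsum (h l) UNIV) UNIV" using l(2) by simp
    have gB: "(g has_sum infsum (h l) UNIV) (B z)" for z
    proof -
      have inj: "inj (\<lambda>q::((int ^ 'd) \<times> (int ^ 'd)). ((fst q, fst z), (snd q, snd z)))"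
        by (auto simp: inj_on_def prod_eq_iff)
      have "g \<circ> (\<lambda>q. ((fst q, fst z), (snd q, snd z))) = h l" by (auto simp: g_def)
      thus ?thesis unfolding B_def using hs by (subst has_sum_reindex[OF inj]) simp
    qed
    have Bsub: "B z \<subseteq> {p. (snd (fst p), snd (snd p)) = z}" for z
      unfolding B_def by auto
    have disj: "B z \<inter> B z' = {}" if "z \<noteq> z'" for z z'
      using Bsub[of z] Bsub[of z'] that by blast
    have s1: "(g has_sum (\<Sum>z\<in>(UNIV::('n \<times> 'n) set). infsum (h l) UNIV)) (\<Union>z\<in>UNIV. B z)"
    proof (rule sum_has_sum[where A=UNIV and f=g and s="\<lambda>_. infsum (h l) UNIV" and B=B])
      show "finite (UNIV :: ('n \<times> 'n) set)" by simp
      fix z :: "'n \<times> 'n" show "(g has_sum infsum (h l) UNIV) (B z)" by (rule gB)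
    next
      fix z z' :: "'n \<times> 'n" assume "z \<noteq> z'" thus "B z \<inter> B z' = {}" by (rule disj)
    qed
    have s2: "(\<Union>z\<in>UNIV. B z) = UNIV"
    proof -
      have "p \<in> B (snd (fst p), snd (snd p))" for p
        unfolding B_def by (rule image_eqI[of _ _ "(fst (fst p), fst (snd p))"]) auto
      thus ?thesis by blast
    qed
    have s3: "(\<Sum>z\<in>(UNIV::('n \<times> 'n) set). infsum (h l) UNIV) = N * infsum (h l) UNIV"
      unfolding N_def by (rule sum_constant)
    have gs: "(g has_sum N * infsum (h l) UNIV) UNIV" using s1 unfolding s2 s3 .
    have gsm: "g summable_on UNIV" using gs unfolding summable_on_def by blast
    have le: "(\<lambda>(i,j). norm (K i j)) p \<le> g p" for p
      using ent[of p] by (simp add: case_prod_beta)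
    have nn: "0 \<le> (\<lambda>(i,j). norm (K i j)) p" for p
      by (simp add: case_prod_beta)
    have fs: "(\<lambda>(i,j). norm (K i j)) summable_on UNIV"
      by (rule summable_on_comparison_test[OF gsm]) (rule le, rule nn)
    have "trace_norm K \<le> (\<Sum>\<^sub>\<infinity>(i,j). norm (K i j))" by (rule tn_entrywise(2)[OF fs])
    also have "\<dots> \<le> infsum g UNIV"
      by (rule infsum_mono[OF fs gsm le])
    also have "\<dots> = N * infsum (h l) UNIV" using gs by (rule infsumI)
    finally show ?thesis unfolding K_def .
  qed
  have "((\<lambda>l. trace_norm (T l D)) \<longlongrightarrow> 0) (at_right 0)"
  proof (rule tendsto_sandwich[where f = "\<lambda>_. 0" and h = "\<lambda>l. N * infsum (h l) UNIV"])
    show "\<forall>\<^sub>F l in at_right 0. 0 \<le> trace_norm (T l D)"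
      using eventually_at_right_less[of "0::real"]
    proof (rule eventually_mono)
      fix l :: real assume "0 < l"
      hence b: "bounded_superop (T l)" using bdd by auto
      show "0 \<le> trace_norm (T l D)" by (rule tn_nonneg[OF so_tc[OF b tD]])
    qed
    show "\<forall>\<^sub>F l in at_right 0. trace_norm (T l D) \<le> N * infsum (h l) UNIV"
      using eventually_conj[OF ev eventually_at_right_less[of "0::real"]]
    proof (rule eventually_mono)
      fix l :: real assume "h l summable_on UNIV \<and> 0 < l"
      thus "trace_norm (T l D) \<le> N * infsum (h l) UNIV" using key by blast
    qed
    show "((\<lambda>_. 0) \<longlongrightarrow> (0::real)) (at_right 0)" by simp
    show "((\<lambda>l. N * infsum (h l) UNIV) \<longlongrightarrow> 0) (at_right 0)"
      using tendsto_mult_right_zero[OF lim] .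
  qed
  thus ?thesis unfolding goodP_def D_def using tD unfolding D_def by simp
qed

definition dd :: "('d::finite,'n) site \<Rightarrow> ('d,'n) site \<Rightarrow> ('d,'n) kernel" where
  "dd p q = elem_op (eu (snd p) (snd q)) (fst p) (fst q)"

lemma dd_eq: "dd p q = (\<lambda>i j. if i = p \<and> j = q then 1 else 0)"
  unfolding dd_def elem_unit by simp

lemma rank_good:
  fixes T :: "real \<Rightarrow> ('d::finite, 'n::finite) kernel \<Rightarrow> ('d,'n) kernel"
  assumes bdd: "\<forall>l>0. bounded_superop (T l)" and C: "\<forall>l>0. superop_norm (T l) \<le> C"
    and pt: "pt_lim_zero T" and u: "is_l2 u" and v: "is_l2 v"
  shows "goodP T (rk u v)"
proof (rule goodP_lim[OF bdd C tc_rank_one(1)[OF u v]])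
  fix e :: real assume e: "e > 0"
  define \<delta> where "\<delta> = e / (l2norm u + l2norm v + 1)"
  have d0: "\<delta> > 0" unfolding \<delta>_def using e l2norm_nonneg[of u] l2norm_nonneg[of v] by simp
  obtain F1 where F1: "finite F1" "(\<Sum>\<^sub>\<infinity>i\<in>-F1. (norm (u i))\<^sup>2) \<le> \<delta>\<^sup>2" using l2_tail[OF u, of "\<delta>\<^sup>2"] d0 by auto
  obtain F2 where F2: "finite F2" "(\<Sum>\<^sub>\<infinity>i\<in>-F2. (norm (v i))\<^sup>2) \<le> \<delta>\<^sup>2" using l2_tail[OF v, of "\<delta>\<^sup>2"] d0 by auto
  define F where "F = F1 \<union> F2"
  have fF: "finite F" unfolding F_def using F1 F2 by simp
  have tu: "l2norm (rst (-F) u) \<le> \<delta>"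
  proof -
    have "(\<Sum>\<^sub>\<infinity>i\<in>-F. (norm (u i))\<^sup>2) \<le> \<delta>\<^sup>2"
      using l2_tail_mono[OF u, of F1 F] F1 unfolding F_def by auto
    hence "sqrt (\<Sum>\<^sub>\<infinity>i\<in>-F. (norm (u i))\<^sup>2) \<le> sqrt (\<delta>\<^sup>2)" by (rule real_sqrt_le_mono)
    thus ?thesis using l2_restrict(2)[OF u] d0 by simp
  qed
  have tv: "l2norm (rst (-F) v) \<le> \<delta>"
  proof -
    have "(\<Sum>\<^sub>\<infinity>i\<in>-F. (norm (v i))\<^sup>2) \<le> \<delta>\<^sup>2"
      using l2_tail_mono[OF v, of F2 F] F2 unfolding F_def by auto
    hence "sqrt (\<Sum>\<^sub>\<infinity>i\<in>-F. (norm (v i))\<^sup>2) \<le> sqrt (\<delta>\<^sup>2)" by (rule real_sqrt_le_mono)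
    thus ?thesis using l2_restrict(2)[OF v] d0 by simp
  qed
  define B where "B = (\<lambda>i j. \<Sum>z\<in>F\<times>F. u (fst z) * cnj (v (snd z)) * dd (fst z) (snd z) i j)"
  have gB: "goodP T B" unfolding B_def
  proof (rule goodP_sum[OF bdd])
    show "finite (F \<times> F)" using fF by simp
    fix z :: "('d,'n) site \<times> ('d,'n) site"
    show "goodP T (\<lambda>i j. u (fst z) * cnj (v (snd z)) * dd (fst z) (snd z) i j)"
      unfolding dd_def by (intro goodP_scale[OF bdd] step1[OF bdd pt])
  qed
  have Beq: "B = rk (rst F u) (rst F v)"
  proof (intro ext)
    fix i j
    have "B i j = (\<Sum>z\<in>F\<times>F. if z = (i,j) then u i * cnj (v j) else 0)"
      unfolding B_def dd_eq by (rule sum.cong) auto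
    also have "\<dots> = (if (i,j) \<in> F \<times> F then u i * cnj (v j) else 0)" using fF by simp
    also have "\<dots> = rk (rst F u) (rst F v) i j" by (auto simp: rk_def rst_def)
    finally show "B i j = rk (rst F u) (rst F v) i j" .
  qed
  have diff: "(\<lambda>i j. rk u v i j - B i j) = (\<lambda>i j. rk u (rst (-F) v) i j + rk (rst (-F) u) (rst F v) i j)"
    unfolding Beq by (intro ext) (auto simp: rk_def rst_def)
  have l2s: "is_l2 (rst (-F) v)" "is_l2 (rst (-F) u)" "is_l2 (rst F v)"
    using l2_restrict(1) u v by auto
  have "trace_norm (\<lambda>i j. rk u v i j - B i j) \<le> trace_norm (rk u (rst (-F) v)) + trace_norm (rk (rst (-F) u) (rst F v))"
    unfolding diff by (intro tc_add(2) tc_rank_one(1) u l2s)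
  also have "\<dots> \<le> l2norm u * l2norm (rst (-F) v) + l2norm (rst (-F) u) * l2norm (rst F v)"
    by (intro add_mono tc_rank_one(2) u l2s)
  also have "\<dots> \<le> l2norm u * \<delta> + \<delta> * l2norm v"
  proof (rule add_mono)
    show "l2norm u * l2norm (rst (-F) v) \<le> l2norm u * \<delta>"
      using tv l2norm_nonneg[of u] by (rule mult_left_mono)
    show "l2norm (rst (-F) u) * l2norm (rst F v) \<le> \<delta> * l2norm v"
      using tu l2norm_restrict_le[OF v, of F] l2norm_nonneg[of "rst F v"] d0 by (intro mult_mono) auto
  qed
  also have "\<dots> = e * ((l2norm u + l2norm v) / (l2norm u + l2norm v + 1))"
    unfolding \<delta>_def by (simp add: field_simps add_divide_distrib)
  also have "\<dots> \<le> e * 1"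
    using e l2norm_nonneg[of u] l2norm_nonneg[of v] by (intro mult_left_mono) auto
  finally show "\<exists>B. goodP T B \<and> trace_norm (\<lambda>i j. rk u v i j - B i j) \<le> e" using gB by auto
qed

lemma all_good:
  fixes T :: "real \<Rightarrow> ('d::finite, 'n::finite) kernel \<Rightarrow> ('d,'n) kernel"
  assumes bdd: "\<forall>l>0. bounded_superop (T l)" and C: "\<forall>l>0. superop_norm (T l) \<le> C"
    and pt: "pt_lim_zero T" and A: "trace_class A"
  shows "goodP T A"
proof (rule goodP_lim[OF bdd C A])
  fix e :: real assume e: "e > 0"
  obtain u v where r: "nuclear_rep A u v" using A unfolding trace_class_def by blast
  have sm: "summable (\<lambda>k. l2norm (u k) * l2norm (v k))" and l2: "\<And>k. is_l2 (u k) \<and> is_l2 (v k)"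
    using r unfolding nuclear_rep_def by auto
  obtain n0 where n0: "\<And>n. n \<ge> n0 \<Longrightarrow> norm ((\<Sum>k<n. l2norm (u k) * l2norm (v k)) - (\<Sum>k. l2norm (u k) * l2norm (v k))) < e"
    using LIMSEQ_D[OF summable_LIMSEQ[OF sm] e] by blast
  define B where "B = (\<lambda>i j. \<Sum>k<n0. u k i * cnj (v k j))"
  have "goodP T (\<lambda>i j. \<Sum>k<n0. rk (u k) (v k) i j)"
  proof (rule goodP_sum[OF bdd])
    fix k show "goodP T (rk (u k) (v k))" using l2[of k] by (intro rank_good[OF bdd C pt]) auto
  qed simp
  hence gB: "goodP T B" unfolding B_def rk_def .
  have "trace_norm (\<lambda>i j. A i j - B i j) \<le> (\<Sum>k. l2norm (u (k+n0)) * l2norm (v (k+n0)))"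
    unfolding B_def by (rule tn_lower[OF nuc_tail(1)[OF r]])
  also have "\<dots> = (\<Sum>k. l2norm (u k) * l2norm (v k)) - (\<Sum>k<n0. l2norm (u k) * l2norm (v k))"
    by (rule nuc_tail(2)[OF r])
  also have "\<dots> \<le> e" using n0[of n0] by (simp add: abs_less_iff)
  finally show "\<exists>B. goodP T B \<and> trace_norm (\<lambda>i j. A i j - B i j) \<le> e" using gB by auto
qed

theorem lemma4p1:
  fixes T :: "real \<Rightarrow> ('d::finite, 'n::finite) kernel \<Rightarrow> ('d,'n) kernel"
  assumes bdd: "\<forall>l>0. bounded_superop (T l)"
    and unif: "\<exists>C. \<forall>l>0. superop_norm (T l) \<le> C"
    and pt: "pt_lim_zero T"
  shows "\<forall>A. trace_class A \<longrightarrow> ((\<lambda>l. trace_norm (T l A)) \<longlongrightarrow> 0) (at_right 0)"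
proof (intro allI impI)
  fix A :: "('d,'n) kernel" assume A: "trace_class A"
  obtain C where C: "\<forall>l>0. superop_norm (T l) \<le> C" using unif by blast
  show "((\<lambda>l. trace_norm (T l A)) \<longlongrightarrow> 0) (at_right 0)"
    using all_good[OF bdd C pt A] unfolding goodP_def by simp
qed

end
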